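(* Let $\mathcal S$ be a trajectory set and fix $n_0\in\mathbb N$. Suppose that for every $S\in\mathcal S$ and every $j\le n_0-1$ the node $\mathcal S_{(S,j)}$ is not an arbitrage node of type II. If $(V,n,H)$ is a positive simple portfolio with maturity $n\le n_0$, then $\Pi^{V,n,H}_j(S)\ge0$ for every $j\in\mathbb N_0$ and every $S\in\mathcal S$.
   Context: Fix $s_0\in\mathbb R$. A trajectory set is any set $\mathcal S$ of real sequences $S=(S_j)_{j\in\mathbb N_0}$ with $S_0=s_0$. A simple portfolio $(V,n,H)$ (with maturity $n$) consists of $V\in\mathbb R$, $n\in\mathbb N$ and nonanticipating functions $H_i:\mathcal S\to\mathbb R$, $0\le i\le n-1$ (i.e. $H_i(S)=h_i(S_0,\dots,S_i)$ for arbitrary $h_i:\mathbb R^{i+1}\to\mathbb R$). Its wealth is $\Pi^{V,n,H}_j(S)=V+\sum_{i=0}^{\min\{j,n\}-1}H_i(S)(S_{i+1}-S_i)$, $\Pi^{V,n,H}_\infty:=\Pi^{V,n,H}_n$; it is positive if $V\ge0$ and $\Pi^{V,n,H}_\infty(S)\ge0$ for all $S\in\mathcal S$. For $S\in\mathcal S$, $j\in\mathbb N_0$, the node is $\mathcal S_{(S,j)}=\{\tilde S\in\mathcal S:(\tilde S_0,\dots,\tilde S_j)=(S_0,\dots,S_j)\}$. It is an arbitrage node if for some $\varepsilon\in\{-1,1\}$, $\varepsilon(\tilde S_{j+1}-S_j)\ge0$ for all $\tilde S\in\mathcal S_{(S,j)}$ with strict inequality for at least one; of type I if some $S'\in\mathcal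 S_{(S,j)}$ has $S'_{j+1}=S_j$, and of type II otherwise. *)

theory Defs
  imports Complex_Main
begin

type_synonym traj = "nat \<Rightarrow> real"

definition trajectory_set :: "real \<Rightarrow> traj set \<Rightarrow> bool" where
  "trajectory_set s0 \<S> \<longleftrightarrow> (\<forall>S\<in>\<S>. S 0 = s0)"

text \<open>Nonanticipating strategy: H i S = h i (S_0,...,S_i), encoded via a list argument.\<close>
definition strat :: "(nat \<Rightarrow> real list \<Rightarrow> real) \<Rightarrow> nat \<Rightarrow> traj \<Rightarrow> real" where
  "strat h i S = h i (map S [0..<Suc i])"

definition wealth :: "real \<Rightarrow> nat \<Rightarrow> (nat \<Rightarrow> real list \<Rightarrow> real) \<Rightarrow> nat \<Rightarrow> traj \<Rightarrow> real" where
  "wealth V n h j S = V + (\<Sum>i<min j n. strat h i S * (S (Suc i) - S i))"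

definition wealth_inf :: "real \<Rightarrow> nat \<Rightarrow> (nat \<Rightarrow> real list \<Rightarrow> real) \<Rightarrow> traj \<Rightarrow> real" where
  "wealth_inf V n h S = wealth V n h n S"

definition positive_portfolio :: "traj set \<Rightarrow> real \<Rightarrow> nat \<Rightarrow> (nat \<Rightarrow> real list \<Rightarrow> real) \<Rightarrow> bool" where
  "positive_portfolio \<S> V n h \<longleftrightarrow> V \<ge> 0 \<and> (\<forall>S\<in>\<S>. wealth_inf V n h S \<ge> 0)"

definition node :: "traj set \<Rightarrow> traj \<Rightarrow> nat \<Rightarrow> traj set" where
  "node \<S> S j = {T \<in> \<S>. \<forall>k\<le>j. T k = S k}"

definition arbitrage_node :: "traj set \<Rightarrow> traj \<Rightarrow> nat \<Rightarrow> bool" where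
  "arbitrage_node \<S> S j \<longleftrightarrow> (\<exists>\<epsilon>\<in>{-1,1::real}.
     (\<forall>T\<in>node \<S> S j. \<epsilon> * (T (Suc j) - S j) \<ge> 0) \<and>
     (\<exists>T\<in>node \<S> S j. \<epsilon> * (T (Suc j) - S j) > 0))"

definition type_I_node :: "traj set \<Rightarrow> traj \<Rightarrow> nat \<Rightarrow> bool" where
  "type_I_node \<S> S j \<longleftrightarrow> (\<exists>T\<in>node \<S> S j. T (Suc j) = S j)"

definition arbitrage_node_type_II :: "traj set \<Rightarrow> traj \<Rightarrow> nat \<Rightarrow> bool" where
  "arbitrage_node_type_II \<S> S j \<longleftrightarrow> arbitrage_node \<S> S j \<and> \<not> type_I_node \<S> S j"

end

theory Submission
  imports Defs
begin

lemma wealth_step: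
  assumes "T \<in> node \<S> S k" "k < n"
  shows "wealth V n h (Suc k) T = wealth V n h k S + strat h k S * (T (Suc k) - S k)"
proof -
  have eq: "\<And>i. i \<le> k \<Longrightarrow> T i = S i" using assms(1) unfolding node_def by auto
  have st: "\<And>i. i \<le> k \<Longrightarrow> strat h i T = strat h i S"
    unfolding strat_def using eq by (intro arg_cong[where f="h _"]) auto
  have "(\<Sum>i<k. strat h i T * (T (Suc i) - T i)) = (\<Sum>i<k. strat h i S * (S (Suc i) - S i))"
    by (rule sum.cong) (auto simp: st eq)
  moreover have "min (Suc k) n = Suc k" "min k n = k" using assms(2) by auto
  ultimately show ?thesis unfolding wealth_def using st[of k] eq[of k] by simp
qed

lemma exists_good:
  assumes "S \<in> \<S>" "\<not> arbitrage_node_type_II \<S> S k"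
  shows "\<exists>T\<in>node \<S> S k. c * (T (Suc k) - S k) \<le> 0"
proof (cases "type_I_node \<S> S k")
  case True
  then show ?thesis unfolding type_I_node_def by force
next
  case False
  hence na: "\<not> arbitrage_node \<S> S k" using assms(2) unfolding arbitrage_node_type_II_def by auto
  have ne: "\<forall>T\<in>node \<S> S k. T (Suc k) \<noteq> S k" using False unfolding type_I_node_def by auto
  have Sin: "S \<in> node \<S> S k" using assms(1) unfolding node_def by auto
  have lo: "\<exists>T\<in>node \<S> S k. T (Suc k) < S k"
  proof (rule ccontr)
    assume A: "\<not> ?thesis"
    hence "\<forall>T\<in>node \<S> S k. 1 * (T (Suc k) - S k) \<ge> 0" by force
    moreover have "\<exists>T\<in>node \<S> S k. 1 * (T (Suc k) - S k) > 0"
      using Sin ne A by (metis linorder_neqE_linordered_idom mult_1 diff_gt_0_iff_gt)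
    ultimately show False using na unfolding arbitrage_node_def by force
  qed
  have hi: "\<exists>T\<in>node \<S> S k. T (Suc k) > S k"
  proof (rule ccontr)
    assume A: "\<not> ?thesis"
    hence "\<forall>T\<in>node \<S> S k. (-1) * (T (Suc k) - S k) \<ge> 0" by force
    moreover have "\<exists>T\<in>node \<S> S k. (-1) * (T (Suc k) - S k) > 0"
      using Sin ne A by (intro bexI[of _ S]) force+
    ultimately show False using na unfolding arbitrage_node_def by force
  qed
  show ?thesis
  proof (cases "c \<ge> 0")
    case True
    with lo obtain T where "T\<in>node \<S> S k" "T (Suc k) < S k" by auto
    then show ?thesis using True by (intro bexI[of _ T]) (auto simp: mult_nonneg_nonpos)
  next
    case False
    with hi obtain T where "T\<in>node \<S> S k" "T (Suc k) > S k" by auto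
    then show ?thesis using False by (intro bexI[of _ T]) (auto simp: mult_nonpos_nonneg)
  qed
qed

theorem lemma5p7:
  fixes s0 :: real and \<S> :: "traj set" and n0 n :: nat and V :: real
    and h :: "nat \<Rightarrow> real list \<Rightarrow> real"
  assumes "trajectory_set s0 \<S>"
    and "n0 \<ge> 1"
    and "\<forall>S\<in>\<S>. \<forall>j. j + 1 \<le> n0 \<longrightarrow> \<not> arbitrage_node_type_II \<S> S j"
    and "n \<ge> 1" and "n \<le> n0"
    and "positive_portfolio \<S> V n h"
  shows "\<forall>j. \<forall>S\<in>\<S>. wealth V n h j S \<ge> 0"
proof -
  have base: "\<forall>S\<in>\<S>. wealth V n h n S \<ge> 0"
    using assms(6) unfolding positive_portfolio_def wealth_inf_def by auto
  have bwd: "\<forall>S\<in>\<S>. wealth V n h (n - m) S \<ge> 0" for m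
  proof (induction m)
    case 0
    then show ?case using base by simp
  next
    case (Suc m)
    show ?case
    proof (cases "m < n")
      case False
      hence "n - Suc m = n - m" by simp
      then show ?thesis using Suc by simp
    next
      case True
      define k where "k = n - Suc m"
      have k: "k < n" "Suc k = n - m" using True unfolding k_def by auto
      show ?thesis unfolding k_def[symmetric]
      proof
        fix S assume S: "S \<in> \<S>"
        have "\<not> arbitrage_node_type_II \<S> S k" using assms(3) S k assms(5) by auto
        then obtain T where T: "T \<in> node \<S> S k" "strat h k S * (T (Suc k) - S k) \<le> 0"
          using exists_good[OF S] by blast
        have "T \<in> \<S>" using T(1) unfolding node_def by auto
        hence "wealth V n h (Suc k) T \<ge> 0" using Suc k by simp
        then show "wealth V n h k S \<ge> 0" using wealth_step[OF T(1) k(1)] T(2) by simp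
      qed
    qed
  qed
  show ?thesis
  proof (intro allI ballI)
    fix j S assume S: "S \<in> \<S>"
    show "wealth V n h j S \<ge> 0"
    proof (cases "j \<le> n")
      case True
      then show ?thesis using bwd[of "n - j"] S by simp
    next
      case False
      hence "wealth V n h j S = wealth V n h n S" unfolding wealth_def by simp
      then show ?thesis using base S by simp
    qed
  qed
qed

end
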